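(* Let $G=(V,E,w)$ be an edge-weighted graph with positive rational weights and no isolated vertices. A set $S\subseteq V$ is a weighted partial positive influence total dominating set (WPPITDS) if and only if $g(S)=g_{\max}$, where $g(A)=h(A)+\frac1L f(A)$ and $g_{\max}=\max_{X\subseteq V}g(X)$.
   Context: $N_A(v)=N(v)\cap A$, $W_A(v)=\sum_{u\in N_A(v)}w_{(v,u)}$, $W(v)=W_V(v)$. $h(A)=\sum_{v\in V}h_A(v)$ with $h_A(v)=W(v)/2$ if $v\in A$ or $W_A(v)\ge W(v)/2$, and $h_A(v)=W_A(v)$ otherwise. $f(A)=\sum_{v\in V}\delta_A(v)$ with $\delta_A(v)=1$ if $|N_A(v)|>0$ and $0$ otherwise. $L=\max_v l(v)$ where $l(v)$ is the lcm of the denominators of the reduced fractions $W(v)/2$ and of the weights of edges incident to $v$. A WPPITDS is a set $S\subseteq V$ such that every $v\in V\setminus S$ satisfies $W_S(v)\ge W(v)/2$ and every vertex of $S$ has at least one neighbor in $S$. *)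

theory Defs
  imports Complex_Main
begin

definition weighted_graph :: "'a set \<Rightarrow> ('a \<times> 'a) set \<Rightarrow> ('a \<times> 'a \<Rightarrow> rat) \<Rightarrow> bool" where
  "weighted_graph V E w \<longleftrightarrow> finite V \<and> E \<subseteq> V \<times> V \<and> (\<forall>v. (v, v) \<notin> E)
     \<and> (\<forall>u v. (u, v) \<in> E \<longrightarrow> (v, u) \<in> E)
     \<and> (\<forall>u v. (u, v) \<in> E \<longrightarrow> w (u, v) = w (v, u) \<and> w (u, v) > 0)"

definition nbrs :: "('a \<times> 'a) set \<Rightarrow> 'a \<Rightarrow> 'a set" where
  "nbrs E v = {u. (v, u) \<in> E}"

definition no_isolated :: "'a set \<Rightarrow> ('a \<times> 'a) set \<Rightarrow> bool" where
  "no_isolated V E \<longleftrightarrow> (\<forall>v\<in>V. nbrs E v \<noteq> {})"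

definition nbrs_in :: "('a \<times> 'a) set \<Rightarrow> 'a set \<Rightarrow> 'a \<Rightarrow> 'a set" where
  "nbrs_in E A v = nbrs E v \<inter> A"

definition Wt :: "('a \<times> 'a) set \<Rightarrow> ('a \<times> 'a \<Rightarrow> rat) \<Rightarrow> 'a set \<Rightarrow> 'a \<Rightarrow> rat" where
  "Wt E w A v = (\<Sum>u\<in>nbrs_in E A v. w (v, u))"

definition Wtot :: "'a set \<Rightarrow> ('a \<times> 'a) set \<Rightarrow> ('a \<times> 'a \<Rightarrow> rat) \<Rightarrow> 'a \<Rightarrow> rat" where
  "Wtot V E w v = Wt E w V v"

definition hv :: "'a set \<Rightarrow> ('a \<times> 'a) set \<Rightarrow> ('a \<times> 'a \<Rightarrow> rat) \<Rightarrow> 'a set \<Rightarrow> 'a \<Rightarrow> rat" where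
  "hv V E w A v = (if v \<in> A \<or> Wt E w A v \<ge> Wtot V E w v / 2 then Wtot V E w v / 2 else Wt E w A v)"

definition hfun :: "'a set \<Rightarrow> ('a \<times> 'a) set \<Rightarrow> ('a \<times> 'a \<Rightarrow> rat) \<Rightarrow> 'a set \<Rightarrow> rat" where
  "hfun V E w A = (\<Sum>v\<in>V. hv V E w A v)"

definition ffun :: "'a set \<Rightarrow> ('a \<times> 'a) set \<Rightarrow> 'a set \<Rightarrow> nat" where
  "ffun V E A = (\<Sum>v\<in>V. if card (nbrs_in E A v) > 0 then 1 else 0)"

definition denom :: "rat \<Rightarrow> nat" where
  "denom q = nat (snd (quotient_of q))"

definition lv :: "'a set \<Rightarrow> ('a \<times> 'a) set \<Rightarrow> ('a \<times> 'a \<Rightarrow> rat) \<Rightarrow> 'a \<Rightarrow> nat" where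
  "lv V E w v = Lcm ({denom (Wtot V E w v / 2)} \<union> (\<lambda>u. denom (w (v, u))) ` nbrs E v)"

definition Lconst :: "'a set \<Rightarrow> ('a \<times> 'a) set \<Rightarrow> ('a \<times> 'a \<Rightarrow> rat) \<Rightarrow> nat" where
  "Lconst V E w = Max (lv V E w ` V)"

definition gfun :: "'a set \<Rightarrow> ('a \<times> 'a) set \<Rightarrow> ('a \<times> 'a \<Rightarrow> rat) \<Rightarrow> 'a set \<Rightarrow> rat" where
  "gfun V E w A = hfun V E w A + of_nat (ffun V E A) / of_nat (Lconst V E w)"

definition gmax :: "'a set \<Rightarrow> ('a \<times> 'a) set \<Rightarrow> ('a \<times> 'a \<Rightarrow> rat) \<Rightarrow> rat" where
  "gmax V E w = Max (gfun V E w ` Pow V)"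

definition is_WPPITDS :: "'a set \<Rightarrow> ('a \<times> 'a) set \<Rightarrow> ('a \<times> 'a \<Rightarrow> rat) \<Rightarrow> 'a set \<Rightarrow> bool" where
  "is_WPPITDS V E w S \<longleftrightarrow> S \<subseteq> V
     \<and> (\<forall>v\<in>V - S. Wt E w S v \<ge> Wtot V E w v / 2)
     \<and> (\<forall>v\<in>S. nbrs_in E S v \<noteq> {})"

end

theory Submission
  imports Defs
begin

lemma nbrs_sub: "weighted_graph V E w \<Longrightarrow> nbrs E v \<subseteq> V"
  unfolding weighted_graph_def nbrs_def by auto

lemma nbrs_in_fin: "weighted_graph V E w \<Longrightarrow> finite (nbrs_in E A v)"
  unfolding nbrs_in_def using nbrs_sub[of V E w v]
  by (meson finite_Int finite_subset weighted_graph_def)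

lemma Wtot_pos:
  assumes "weighted_graph V E w" "no_isolated V E" "v \<in> V"
  shows "Wtot V E w v > 0"
proof -
  have ne: "nbrs E v \<noteq> {}" using assms(2,3) unfolding no_isolated_def by auto
  have eq: "nbrs_in E V v = nbrs E v" using nbrs_sub[OF assms(1)] unfolding nbrs_in_def by auto
  have fin: "finite (nbrs E v)" using nbrs_in_fin[OF assms(1), of V v] eq by simp
  have "\<forall>u\<in>nbrs E v. w (v,u) > 0" using assms(1) unfolding weighted_graph_def nbrs_def by auto
  then show ?thesis unfolding Wtot_def Wt_def eq using ne fin by (simp add: sum_pos)
qed

lemma hv_le: "hv V E w A v \<le> Wtot V E w v / 2"
  unfolding hv_def by auto

lemma hv_eq: "hv V E w A v = Wtot V E w v / 2 \<longleftrightarrow> (v \<in> A \<or> Wt E w A v \<ge> Wtot V E w v / 2)"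
  unfolding hv_def by auto

lemma hfun_le: "hfun V E w A \<le> (\<Sum>v\<in>V. Wtot V E w v / 2)"
  unfolding hfun_def by (rule sum_mono) (rule hv_le)

lemma hfun_eq:
  assumes "finite V"
  shows "hfun V E w A = (\<Sum>v\<in>V. Wtot V E w v / 2) \<longleftrightarrow> (\<forall>v\<in>V. v \<in> A \<or> Wt E w A v \<ge> Wtot V E w v / 2)"
proof -
  have "hfun V E w A = (\<Sum>v\<in>V. Wtot V E w v / 2) \<longleftrightarrow> (\<Sum>v\<in>V. Wtot V E w v / 2 - hv V E w A v) = 0"
    unfolding hfun_def by (auto simp: sum_subtractf)
  also have "\<dots> \<longleftrightarrow> (\<forall>v\<in>V. Wtot V E w v / 2 - hv V E w A v = 0)"
    using assms hv_le[of V E w A] by (intro sum_nonneg_eq_0_iff) (auto simp del: hv_le)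
  also have "\<dots> \<longleftrightarrow> (\<forall>v\<in>V. v \<in> A \<or> Wt E w A v \<ge> Wtot V E w v / 2)"
    using hv_eq by (metis eq_iff_diff_eq_0)
  finally show ?thesis .
qed

lemma ffun_card: "finite V \<Longrightarrow> ffun V E A = card {v\<in>V. card (nbrs_in E A v) > 0}"
  unfolding ffun_def by (simp add: sum.inter_filter[symmetric])

lemma ffun_le: "finite V \<Longrightarrow> ffun V E A \<le> card V"
  by (simp add: ffun_card card_mono)

lemma ffun_eq: "finite V \<Longrightarrow> ffun V E A = card V \<longleftrightarrow> (\<forall>v\<in>V. card (nbrs_in E A v) > 0)"
proof -
  assume f: "finite V"
  have "ffun V E A = card V \<longleftrightarrow> {v\<in>V. card (nbrs_in E A v) > 0} = V"
    using f ffun_card[OF f] by (metis (no_types, lifting) card_subset_eq mem_Collect_eq subsetI)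
  then show ?thesis by auto
qed

lemma L_pos:
  assumes "weighted_graph V E w" "V \<noteq> {}"
  shows "Lconst V E w > 0"
proof -
  have fin: "finite V" using assms unfolding weighted_graph_def by auto
  obtain v where v: "v \<in> V" using assms by auto
  have dpos: "denom q > 0" for q
    unfolding denom_def using quotient_of_denom_pos'[of q] by simp
  have fn: "finite (nbrs E v)" using nbrs_sub[OF assms(1)] fin finite_subset by blast
  have "lv V E w v \<noteq> 0" unfolding lv_def
    using fn dpos by (auto simp: Lcm_0_iff_nat) (metis less_irrefl)
  then have "lv V E w v > 0" by simp
  moreover have "lv V E w v \<le> Lconst V E w"
    unfolding Lconst_def using fin v by (intro Max_ge) auto
  ultimately show ?thesis by simp
qed

lemma WPP_iff:
  assumes "weighted_graph V E w" "no_isolated V E" "S \<subseteq> V"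
  shows "is_WPPITDS V E w S \<longleftrightarrow> (\<forall>v\<in>V. v \<in> S \<or> Wt E w S v \<ge> Wtot V E w v / 2)
     \<and> (\<forall>v\<in>V. card (nbrs_in E S v) > 0)"
proof
  assume W: "is_WPPITDS V E w S"
  show "(\<forall>v\<in>V. v \<in> S \<or> Wt E w S v \<ge> Wtot V E w v / 2) \<and> (\<forall>v\<in>V. card (nbrs_in E S v) > 0)"
  proof (intro conjI ballI)
    fix v assume "v \<in> V" then show "v \<in> S \<or> Wt E w S v \<ge> Wtot V E w v / 2"
      using W unfolding is_WPPITDS_def by auto
  next
    fix v assume v: "v \<in> V"
    have "nbrs_in E S v \<noteq> {}"
    proof (cases "v \<in> S")
      case True then show ?thesis using W unfolding is_WPPITDS_def by auto
    next
      case False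
      then have "Wt E w S v \<ge> Wtot V E w v / 2" using W v unfolding is_WPPITDS_def by auto
      moreover have "Wtot V E w v > 0" using Wtot_pos[OF assms(1,2) v] .
      ultimately have "Wt E w S v \<noteq> 0" by linarith
      then show ?thesis unfolding Wt_def by auto
    qed
    then show "card (nbrs_in E S v) > 0" using nbrs_in_fin[OF assms(1)] by (simp add: card_gt_0_iff)
  qed
next
  assume R: "(\<forall>v\<in>V. v \<in> S \<or> Wt E w S v \<ge> Wtot V E w v / 2) \<and> (\<forall>v\<in>V. card (nbrs_in E S v) > 0)"
  then show "is_WPPITDS V E w S" unfolding is_WPPITDS_def using assms(3)
    by (auto simp: card_gt_0_iff)
qed

theorem mainTheorem16:
  fixes V :: "'a set" and E :: "('a \<times> 'a) set" and w :: "'a \<times> 'a \<Rightarrow> rat" and S :: "'a set"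
  assumes "weighted_graph V E w"
    and "no_isolated V E"
    and "S \<subseteq> V"
  shows "is_WPPITDS V E w S \<longleftrightarrow> gfun V E w S = gmax V E w"
proof (cases "V = {}")
  case True
  then have "S = {}" using assms(3) by auto
  then show ?thesis using True unfolding is_WPPITDS_def gmax_def by simp
next
  case False
  have fin: "finite V" using assms(1) unfolding weighted_graph_def by auto
  define H where "H = (\<Sum>v\<in>V. Wtot V E w v / 2)"
  define L where "L = Lconst V E w"
  have Lp: "(of_nat L :: rat) > 0" using L_pos[OF assms(1) False] L_def by simp
  have gA: "gfun V E w A \<le> H + of_nat (card V) / of_nat L" for A
  proof -
    have "hfun V E w A \<le> H" using hfun_le H_def by simp
    moreover have "of_nat (ffun V E A) / of_nat L \<le> (of_nat (card V) :: rat) / of_nat L"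
      using ffun_le[OF fin] Lp by (simp add: divide_right_mono)
    ultimately show ?thesis unfolding gfun_def L_def by linarith
  qed
  have gV: "gfun V E w V = H + of_nat (card V) / of_nat L"
  proof -
    have "hfun V E w V = H" unfolding H_def using hfun_eq[OF fin] by auto
    moreover have "ffun V E V = card V"
    proof -
      have "\<forall>v\<in>V. card (nbrs_in E V v) > 0"
      proof
        fix v assume v: "v \<in> V"
        have "nbrs_in E V v = nbrs E v" using nbrs_sub[OF assms(1)] unfolding nbrs_in_def by auto
        moreover have "nbrs E v \<noteq> {}" using assms(2) v unfolding no_isolated_def by auto
        ultimately show "card (nbrs_in E V v) > 0" using nbrs_in_fin[OF assms(1), of V v]
          by (simp add: card_gt_0_iff)
      qed
      then show ?thesis using ffun_eq[OF fin] by blast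
    qed
    ultimately show ?thesis unfolding gfun_def L_def by simp
  qed
  have gm: "gmax V E w = H + of_nat (card V) / of_nat L"
  proof -
    have "gmax V E w = gfun V E w V" unfolding gmax_def
      using fin gA gV by (intro Max_eqI) (auto, metis Pow_top image_eqI)
    then show ?thesis using gV by simp
  qed
  have "gfun V E w S = gmax V E w \<longleftrightarrow> hfun V E w S = H \<and> ffun V E S = card V"
  proof
    assume eq: "gfun V E w S = gmax V E w"
    have h1: "hfun V E w S \<le> H" using hfun_le H_def by simp
    have f1: "of_nat (ffun V E S) / of_nat L \<le> (of_nat (card V) :: rat) / of_nat L"
      using ffun_le[OF fin] Lp by (simp add: divide_right_mono)
    have s: "hfun V E w S + of_nat (ffun V E S) / of_nat L = H + of_nat (card V) / of_nat L"
      using eq gm unfolding gfun_def L_def by simp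
    have "hfun V E w S = H" using h1 f1 s by linarith
    moreover have "of_nat (ffun V E S) / of_nat L = (of_nat (card V) :: rat) / of_nat L"
      using h1 f1 s by linarith
    then have "ffun V E S = card V" using Lp by (simp add: divide_cancel_right)
    ultimately show "hfun V E w S = H \<and> ffun V E S = card V" by simp
  next
    assume "hfun V E w S = H \<and> ffun V E S = card V"
    then show "gfun V E w S = gmax V E w" using gm unfolding gfun_def L_def by simp
  qed
  also have "\<dots> \<longleftrightarrow> is_WPPITDS V E w S"
    using WPP_iff[OF assms] hfun_eq[OF fin] ffun_eq[OF fin] H_def by simp
  finally show ?thesis by simp
qed

end
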